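(* Let $a$ be a positive, locally integrable, monotonically increasing function on $\mathbb{R}_+$ such that $\hat a(x):=x/a(x)$ is also monotonically increasing on $\mathbb{R}_+$. Let $q$ be a complex-valued potential with $\|q\|_a:=\int_0^\infty a(x)|q(x)|\,dx<\infty$ (so $q\in L^1(\mathbb{R}_+)$). Define $$\rho=\rho(a,q):=\inf\Bigl\{t>0:\ \hat a(\sqrt t)\ge\frac{\log 2}{\|q\|_a}\Bigr\}.$$ Then $\sigma_d(H_q)$ is contained in the closed disk $\{\lambda:|\lambda|\le\rho^{-1}\}$. If $\hat a(\infty):=\lim_{x\to\infty}\hat a(x)<\log 2\,\|q\|_a^{-1}$, then $\rho=\infty$ and $\sigma_d(H_q)$ is empty.
   Context: $H_q=-\frac{d^2}{dx^2}+q$ on $L^2(\mathbb{R}_+)$ with Dirichlet boundary condition at $0$; $\sigma_d(H_q)$ is its set of eigenvalues of finite algebraic multiplicity in $\mathbb{C}\setminus\mathbb{R}_+$. Conventions: $\inf\emptyset=+\infty$, $1/\infty=0$. *)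

theory Defs
  imports "HOL-Analysis.Analysis"
begin

definition L2_half :: "(real \<Rightarrow> complex) \<Rightarrow> bool" where
  "L2_half f \<longleftrightarrow> set_borel_measurable lborel {0..} f \<and>
     set_integrable lborel {0..} (\<lambda>t. (cmod (f t))\<^sup>2)"

text \<open>(H_q - lam) y = f with y in the domain of the Dirichlet operator H_q:
  y, f in L2(R+), y(0) = 0, y and y' locally absolutely continuous on [0,inf),
  and -y'' + q y - lam y = f a.e., written in integrated form
  y'(x) = y'(0) + int_0^x ((q - lam) y - f).\<close>
definition Hq_minus_solves ::
  "(real \<Rightarrow> complex) \<Rightarrow> complex \<Rightarrow> (real \<Rightarrow> complex) \<Rightarrow> (real \<Rightarrow> complex) \<Rightarrow> bool" where
  "Hq_minus_solves q lam y f \<longleftrightarrow>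
     L2_half y \<and> L2_half f \<and> y 0 = 0 \<and>
     (\<exists>y'. (\<forall>x\<ge>0. (y has_vector_derivative y' x) (at x within {0..})) \<and>
       (\<forall>x\<ge>0. set_integrable lborel {0..x} (\<lambda>t. (q t - lam) * y t - f t) \<and>
          y' x = y' 0 + (LINT t:{0..x}|lborel. (q t - lam) * y t - f t)))"

text \<open>Root vectors: y in ker (H_q - lam)^k (functions compared on [0,inf)).\<close>
fun root_vec :: "(real \<Rightarrow> complex) \<Rightarrow> complex \<Rightarrow> nat \<Rightarrow> (real \<Rightarrow> complex) \<Rightarrow> bool" where
  "root_vec q lam 0 y \<longleftrightarrow> (\<forall>x\<ge>0. y x = 0)"
| "root_vec q lam (Suc k) y \<longleftrightarrow> (\<exists>f. Hq_minus_solves q lam y f \<and> root_vec q lam k f)"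

definition is_eigenvalue :: "(real \<Rightarrow> complex) \<Rightarrow> complex \<Rightarrow> bool" where
  "is_eigenvalue q lam \<longleftrightarrow> (\<exists>y. root_vec q lam 1 y \<and> (\<exists>x\<ge>0. y x \<noteq> 0))"

definition finite_alg_mult :: "(real \<Rightarrow> complex) \<Rightarrow> complex \<Rightarrow> bool" where
  "finite_alg_mult q lam \<longleftrightarrow>
     (\<exists>B. finite B \<and> (\<forall>k y. root_vec q lam k y \<longrightarrow>
        (\<exists>c. \<forall>x\<ge>0. y x = (\<Sum>b\<in>B. c b * b x))))"

definition sigma_d :: "(real \<Rightarrow> complex) \<Rightarrow> complex set" where
  "sigma_d q = {lam. \<not> (Im lam = 0 \<and> Re lam \<ge> 0) \<and> is_eigenvalue q lam \<and> finite_alg_mult q lam}"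

definition a_norm :: "(real \<Rightarrow> real) \<Rightarrow> (real \<Rightarrow> complex) \<Rightarrow> real" where
  "a_norm a q = (LINT x:{0<..}|lborel. a x * cmod (q x))"

definition a_hat :: "(real \<Rightarrow> real) \<Rightarrow> real \<Rightarrow> real" where
  "a_hat a x = x / a x"

text \<open>rho = inf {t>0 : a_hat(sqrt t) >= log 2 / ||q||_a}, in ereal (inf of empty = inf,
  log 2 / 0 = inf).\<close>
definition rho :: "(real \<Rightarrow> real) \<Rightarrow> (real \<Rightarrow> complex) \<Rightarrow> ereal" where
  "rho a q = Inf {ereal t | t. t > 0 \<and>
      ereal (a_hat a (sqrt t)) \<ge> ereal (ln 2) / ereal (a_norm a q)}"

end

theory Submission
  imports Defs
begin

lemma fubini_tri:
  fixes h \<phi> :: "real \<Rightarrow> complex"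
  assumes hi: "set_integrable lborel {a..b} h" and pc: "continuous_on {a..b} \<phi>" and ab: "a \<le> b"
  shows "(LINT s:{a..b}|lborel. (LINT t:{s..b}|lborel. \<phi> t) * h s) =
         (LINT t:{a..b}|lborel. \<phi> t * (LINT s:{a..t}|lborel. h s))"
proof -
  define ph where "ph t = indicator {a..b} t *\<^sub>R \<phi> t" for t
  define hh where "hh s = indicator {a..b} s *\<^sub>R h s" for s
  have phm[measurable]: "ph \<in> borel_measurable lborel"
    unfolding ph_def using pc by (simp add: borel_measurable_continuous_on_indicator)
  have hhm[measurable]: "hh \<in> borel_measurable lborel"
    using hi unfolding hh_def set_integrable_def by (rule borel_measurable_integrable)
  have hhi: "integrable lborel hh" using hi unfolding hh_def set_integrable_def .
  obtain B where B: "\<And>t. norm (ph t) \<le> B" and B0: "B \<ge> 0"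
  proof -
    have "compact (\<phi> ` {a..b})" using pc by (intro compact_continuous_image) auto
    then obtain B where "\<forall>x\<in>\<phi> ` {a..b}. norm x \<le> B" "B > 0" using compact_imp_bounded bounded_pos by metis
    then show ?thesis using that[of B] unfolding ph_def by (force simp: indicator_def)
  qed
  define I where "I p = (if a \<le> fst p \<and> fst p \<le> snd p \<and> snd p \<le> b then 1 else 0::real)" for p
  define F where "F s t = I (s,t) *\<^sub>R (ph t * hh s)" for s t
  have Im[measurable]: "I \<in> borel_measurable (lborel \<Otimes>\<^sub>M lborel)"
    unfolding I_def by measurable
  have Fm[measurable]: "case_prod F \<in> borel_measurable (lborel \<Otimes>\<^sub>M lborel)"
    unfolding F_def by measurable

  have ind_int: "integrable lborel (\<lambda>t. indicator {a..b} t * c)" for c :: real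
    by (intro integrable_mult_left) (simp add: integrable_indicator_iff emeasure_lborel_Icc_eq)
  have Fbound: "norm (F s t) \<le> indicator {a..b} t * (B * norm (hh s))" for s t
    using B[of t] B0 by (auto simp: F_def I_def norm_mult indicator_def intro!: mult_right_mono)
  have inner_int: "integrable lborel (\<lambda>t. F s t)" for s
    by (rule Bochner_Integration.integrable_bound[OF ind_int[of "B * norm (hh s)"]]) (use Fbound B0 in \<open>auto intro!: AE_I2 order_trans[OF Fbound]\<close>)
  have inner_norm_int: "integrable lborel (\<lambda>t. norm (F s t))" for s
    using inner_int by auto
  have Fint: "integrable (lborel \<Otimes>\<^sub>M lborel) (case_prod F)"
  proof (rule lborel_pair.Fubini_integrable)
    show "integrable lborel (\<lambda>x. \<integral>y. norm (case_prod F (x, y)) \<partial>lborel)"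
    proof (rule Bochner_Integration.integrable_bound[of _ "\<lambda>s. (b - a) * B * norm (hh s)"])
      show "integrable lborel (\<lambda>s. (b - a) * B * norm (hh s))" using hhi by auto
      show "(\<lambda>x. \<integral>y. norm (case_prod F (x, y)) \<partial>lborel) \<in> borel_measurable lborel"
        by (rule lborel.borel_measurable_lebesgue_integral) simp
      show "AE x in lborel. norm (\<integral>y. norm (case_prod F (x, y)) \<partial>lborel) \<le> norm ((b - a) * B * norm (hh x))"
      proof (intro AE_I2)
        fix s
        have "(\<integral>y. norm (F s y) \<partial>lborel) \<le> (\<integral>y. indicator {a..b} y * (B * norm (hh s)) \<partial>lborel)"
          by (intro integral_mono inner_norm_int ind_int Fbound)
        also have "\<dots> = (b - a) * B * norm (hh s)" using ab by simp
        finally show "norm (\<integral>y. norm (case_prod F (s, y)) \<partial>lborel) \<le> norm ((b - a) * B * norm (hh s))"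
          using B0 ab by (simp add: integral_nonneg_AE)
      qed
    qed
    show "AE x in lborel. integrable lborel (\<lambda>y. case_prod F (x, y))" using inner_int by simp
  qed (simp)
  have fub: "(\<integral>t. (\<integral>s. F s t \<partial>lborel) \<partial>lborel) = (\<integral>s. (\<integral>t. F s t \<partial>lborel) \<partial>lborel)"
    by (rule lborel_pair.Fubini_integral[OF Fint])
  have L: "indicator {a..b} s *\<^sub>R ((LINT t:{s..b}|lborel. \<phi> t) * h s) = (\<integral>t. F s t \<partial>lborel)" for s
  proof (cases "a \<le> s \<and> s \<le> b")
    case True
    have "(\<integral>t. F s t \<partial>lborel) = (\<integral>t. (indicator {s..b} t *\<^sub>R \<phi> t) * h s \<partial>lborel)"
      using True by (intro Bochner_Integration.integral_cong) (auto simp: F_def I_def ph_def hh_def indicator_def)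
    also have "\<dots> = (LINT t:{s..b}|lborel. \<phi> t) * h s"
      unfolding set_lebesgue_integral_def by (subst integral_mult_left_zero[symmetric]) simp
    finally show ?thesis using True by simp
  next
    case False
    then have "\<And>u. F s u = 0" by (auto simp: F_def I_def)
    then show ?thesis using False by (simp add: indicator_def)
  qed
  have R: "indicator {a..b} t *\<^sub>R (\<phi> t * (LINT s:{a..t}|lborel. h s)) = (\<integral>s. F s t \<partial>lborel)" for t
  proof (cases "a \<le> t \<and> t \<le> b")
    case True
    have "(\<integral>s. F s t \<partial>lborel) = (\<integral>s. \<phi> t * (indicator {a..t} s *\<^sub>R h s) \<partial>lborel)"
      using True by (intro Bochner_Integration.integral_cong) (auto simp: F_def I_def ph_def hh_def indicator_def)
    also have "\<dots> = \<phi> t * (LINT s:{a..t}|lborel. h s)"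
      unfolding set_lebesgue_integral_def by (subst integral_mult_right_zero[symmetric]) simp
    finally show ?thesis using True by simp
  next
    case False
    then have "\<And>u. F u t = 0" by (auto simp: F_def I_def)
    then show ?thesis using False by (simp add: indicator_def)
  qed
  show ?thesis
    unfolding set_lebesgue_integral_def[of _ "{a..b}"] L R fub ..
qed

lemma cont_set_integrable:
  fixes f :: "real \<Rightarrow> complex"
  assumes "continuous_on {a..b} f"
  shows "set_integrable lborel {a..b} f"
  unfolding set_integrable_def using borel_integrable_compact[OF compact_Icc assms] .

lemma cont_LINT_eq:
  fixes f :: "real \<Rightarrow> complex"
  assumes "continuous_on {a..b} f"
  shows "(LINT t:{a..b}|lborel. f t) = integral {a..b} f"
  using set_borel_integral_eq_integral(2)[OF cont_set_integrable[OF assms]] .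

lemma FTC_LINT:
  fixes f F :: "real \<Rightarrow> complex"
  assumes "a \<le> b" "continuous_on {a..b} f"
    "\<And>t. t \<in> {a..b} \<Longrightarrow> (F has_vector_derivative f t) (at t within {a..b})"
  shows "(LINT t:{a..b}|lborel. f t) = F b - F a"
  using cont_LINT_eq[OF assms(2)] fundamental_theorem_of_calculus[OF assms(1,3)]
  by (simp add: integral_unique)

lemma sint_cont_mult:
  fixes h \<phi> :: "real \<Rightarrow> complex"
  assumes hi: "set_integrable lborel {a..b} h" and pc: "continuous_on {a..b} \<phi>"
  shows "set_integrable lborel {a..b} (\<lambda>t. \<phi> t * h t)"
proof -
  define ph where "ph t = indicator {a..b} t *\<^sub>R \<phi> t" for t
  have phm[measurable]: "ph \<in> borel_measurable lborel"
    unfolding ph_def using pc by (simp add: borel_measurable_continuous_on_indicator)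
  obtain B where B: "\<And>t. norm (ph t) \<le> B"
  proof -
    have "compact (\<phi> ` {a..b})" using pc by (intro compact_continuous_image) auto
    then obtain B where "\<forall>x\<in>\<phi> ` {a..b}. norm x \<le> B" "B > 0" using compact_imp_bounded bounded_pos by metis
    then show ?thesis using that[of B] unfolding ph_def by (force simp: indicator_def)
  qed
  have hm: "(\<lambda>t. indicator {a..b} t *\<^sub>R h t) \<in> borel_measurable lborel"
    using hi unfolding set_integrable_def by (rule borel_measurable_integrable)
  have eq: "(\<lambda>t. indicator {a..b} t *\<^sub>R (\<phi> t * h t)) = (\<lambda>t. ph t * (indicator {a..b} t *\<^sub>R h t))"
    by (auto simp: ph_def indicator_def)
  show ?thesis unfolding set_integrable_def eq
  proof (rule Bochner_Integration.integrable_bound[of _ "\<lambda>t. B * norm (indicator {a..b} t *\<^sub>R h t)"])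
    show "integrable lborel (\<lambda>t. B * norm (indicator {a..b} t *\<^sub>R h t))"
      by (intro integrable_mult_right integrable_norm) (use hi in \<open>simp add: set_integrable_def\<close>)
    show "(\<lambda>t. ph t * (indicator {a..b} t *\<^sub>R h t)) \<in> borel_measurable lborel"
      using hm by measurable
    show "AE x in lborel. norm (ph x * (indicator {a..b} x *\<^sub>R h x)) \<le> norm (B * norm (indicator {a..b} x *\<^sub>R h x))"
    proof (intro AE_I2)
      fix x
      have "norm (ph x * (indicator {a..b} x *\<^sub>R h x)) = norm (ph x) * norm (indicator {a..b} x *\<^sub>R h x)"
        by (rule norm_mult)
      also have "\<dots> \<le> B * norm (indicator {a..b} x *\<^sub>R h x)"
        using B[of x] by (intro mult_right_mono) auto
      also have "\<dots> \<le> norm (B * norm (indicator {a..b} x *\<^sub>R h x))"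
        by (metis abs_ge_self real_norm_def)
      finally show "norm (ph x * (indicator {a..b} x *\<^sub>R h x)) \<le> norm (B * norm (indicator {a..b} x *\<^sub>R h x))" .
    qed
  qed
qed

lemma alg_lemma:
  fixes Ex yx' c Ih Iy' IE Iy Ig yx k lam :: complex
  assumes "Ex*(yx' - c) - Ih = \<i>*k*Iy' - \<i>*k*c*IE" "Iy' = Ex*yx - \<i>*k*Iy" "\<i>*k*IE = Ex - 1"
    "Ig = Ih + lam*Iy" "k^2 = lam"
  shows "Ig = Ex*(yx' - \<i>*k*yx) - c"
proof -
  have "Ih = Ex*(yx' - c) - \<i>*k*Iy' + c*(\<i>*k*IE)" using assms(1) by (simp add: algebra_simps)
  also have "\<dots> = Ex*(yx' - c) - \<i>*k*(Ex*yx - \<i>*k*Iy) + c*(Ex - 1)" using assms(2,3) by simp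
  also have "\<dots> = Ex*(yx' - \<i>*k*yx) - c - k^2*Iy" by (simp add: algebra_simps power2_eq_square)
  finally show ?thesis using assms(4,5) by simp
qed

lemma exp_vderiv:
  fixes c :: complex
  shows "((\<lambda>s. exp (c * of_real s)) has_vector_derivative (c * exp (c * of_real s))) (at s within S)"
proof -
  have "((\<lambda>z. exp (c * z)) has_field_derivative (c * exp (c * of_real s))) (at (of_real s))"
    by (auto intro!: derivative_eq_intros)
  from has_vector_derivative_real_field[OF this] show ?thesis .
qed

locale odesol =
  fixes q y y' :: "real \<Rightarrow> complex" and lam :: complex
  assumes y0: "y 0 = 0"
  and yd: "\<And>x. x \<ge> 0 \<Longrightarrow> (y has_vector_derivative y' x) (at x within {0..})"
  and hint: "\<And>x. x \<ge> 0 \<Longrightarrow> set_integrable lborel {0..x} (\<lambda>t. (q t - lam) * y t)"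
  and yeq: "\<And>x. x \<ge> 0 \<Longrightarrow> y' x = y' 0 + (LINT t:{0..x}|lborel. (q t - lam) * y t)"

context odesol
begin

lemma yd': "t \<in> {a..b} \<Longrightarrow> a \<ge> 0 \<Longrightarrow> (y has_vector_derivative y' t) (at t within {a..b})"
  by (rule has_vector_derivative_within_subset[OF yd]) auto

lemma ycont: "a \<ge> 0 \<Longrightarrow> continuous_on {a..b} y"
  by (rule continuous_on_vector_derivative) (rule yd')

lemma hint_sub: "0 \<le> a \<Longrightarrow> a \<le> b \<Longrightarrow> set_integrable lborel {a..b} (\<lambda>t. (q t - lam) * y t)"
  by (rule set_integrable_subset[OF hint[of b]]) auto

lemma Hcont: "x \<ge> 0 \<Longrightarrow> continuous_on {0..x} (\<lambda>t. LINT s:{0..t}|lborel. (q s - lam) * y s)"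
proof -
  assume x: "x \<ge> 0"
  have "continuous_on {0..x} (\<lambda>t. integral {0..t} (\<lambda>s. (q s - lam) * y s))"
    by (rule indefinite_integral_continuous_1) (rule set_borel_integral_eq_integral(1)[OF hint[OF x]])
  then show ?thesis
    by (rule continuous_on_eq) (auto simp: set_borel_integral_eq_integral(2)[OF hint])
qed

lemma y'cont: "x \<ge> 0 \<Longrightarrow> continuous_on {0..x} y'"
proof -
  assume x: "x \<ge> 0"
  have "continuous_on {0..x} (\<lambda>t. y' 0 + (LINT s:{0..t}|lborel. (q s - lam) * y s))"
    by (intro continuous_intros Hcont x)
  then show ?thesis
    by (rule continuous_on_eq) (metis atLeastAtMost_iff yeq)
qed

lemma gint: "x \<ge> 0 \<Longrightarrow> set_integrable lborel {0..x} (\<lambda>t. q t * y t)"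
proof -
  assume x: "x \<ge> 0"
  have a: "set_integrable lborel {0..x} (\<lambda>t. (q t - lam) * y t)" by (rule hint[OF x])
  have b: "set_integrable lborel {0..x} (\<lambda>t. lam * y t)"
    by (rule set_integrable_mult_right) (rule cont_set_integrable[OF ycont], simp)
  have "set_integrable lborel {0..x} (\<lambda>t. (q t - lam) * y t + lam * y t)"
    by (rule set_integral_add(1)[OF a b])
  then show ?thesis by (simp add: algebra_simps)
qed

lemma A_formula:
  assumes x: "x \<ge> 0" and kap: "\<kappa>^2 = lam"
  shows "exp (\<i>*\<kappa> * of_real x) * (y' x - \<i>*\<kappa>*y x) = y' 0 + (LINT s:{0..x}|lborel. exp (\<i>*\<kappa> * of_real s) * (q s * y s))"
proof -
  define E where "E s = exp (\<i>*\<kappa> * of_real s)" for s :: real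
  define h where "h t = (q t - lam) * y t" for t
  define c where "c = y' 0"
  have Ed: "(E has_vector_derivative (\<i>*\<kappa>*E s)) (at s within S)" for s S
    unfolding E_def using exp_vderiv[of "\<i>*\<kappa>" s S] by simp
  have Ec: "continuous_on S E" for S
    unfolding E_def by (intro continuous_intros)
  have hi: "set_integrable lborel {0..x} h" unfolding h_def using hint[OF x] .
  have Ehi: "set_integrable lborel {0..x} (\<lambda>t. E t * h t)" by (rule sint_cont_mult[OF hi Ec])
  have Eyi: "set_integrable lborel {0..x} (\<lambda>t. E t * y t)"
    by (intro cont_set_integrable continuous_intros Ec ycont) simp
  have Egi: "set_integrable lborel {0..x} (\<lambda>t. E t * (q t * y t))" by (rule sint_cont_mult[OF gint[OF x] Ec])
  have Ei: "set_integrable lborel {0..x} E" by (intro cont_set_integrable Ec)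
  have y'c: "continuous_on {0..x} y'" by (rule y'cont[OF x])
  have Ey'i: "set_integrable lborel {0..x} (\<lambda>t. E t * y' t)"
    by (intro cont_set_integrable continuous_intros Ec y'c)
  have F1: "(LINT s:{0..x}|lborel. (LINT t:{s..x}|lborel. \<i>*\<kappa>*E t) * h s) =
         (LINT t:{0..x}|lborel. \<i>*\<kappa>*E t * (LINT s:{0..t}|lborel. h s))"
    by (rule fubini_tri[OF hi _ x]) (intro continuous_intros Ec)
  have F2: "(LINT t:{s..x}|lborel. \<i>*\<kappa>*E t) = E x - E s" if "s \<in> {0..x}" for s
    using that by (intro FTC_LINT Ed continuous_intros Ec) auto
  have "(LINT s:{0..x}|lborel. (LINT t:{s..x}|lborel. \<i>*\<kappa>*E t) * h s) =
        (LINT s:{0..x}|lborel. E x * h s - E s * h s)"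
  proof (rule set_lebesgue_integral_cong)
    show "\<forall>s. s \<in> {0..x} \<longrightarrow> (LINT t:{s..x}|lborel. \<i>*\<kappa>*E t) * h s = E x * h s - E s * h s"
    proof (intro allI impI)
      fix s assume s: "s \<in> {0..x}"
      show "(LINT t:{s..x}|lborel. \<i>*\<kappa>*E t) * h s = E x * h s - E s * h s"
        by (subst F2[OF s]) (simp add: algebra_simps)
    qed
  qed simp
  also have "\<dots> = E x * (LINT s:{0..x}|lborel. h s) - (LINT s:{0..x}|lborel. E s * h s)"
    using hi Ehi by (subst set_integral_diff(2)) auto
  also have "(LINT s:{0..x}|lborel. h s) = y' x - c"
    using yeq[OF x] by (simp add: h_def c_def)
  finally have L: "(LINT s:{0..x}|lborel. (LINT t:{s..x}|lborel. \<i>*\<kappa>*E t) * h s) =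
     E x * (y' x - c) - (LINT s:{0..x}|lborel. E s * h s)" .
  have "(LINT t:{0..x}|lborel. \<i>*\<kappa>*E t * (LINT s:{0..t}|lborel. h s)) =
        (LINT t:{0..x}|lborel. \<i>*\<kappa>*(E t * y' t) - \<i>*\<kappa>*c * E t)"
  proof (rule set_lebesgue_integral_cong)
    show "\<forall>t. t \<in> {0..x} \<longrightarrow> \<i>*\<kappa>*E t * (LINT s:{0..t}|lborel. h s) = \<i>*\<kappa>*(E t * y' t) - \<i>*\<kappa>*c * E t"
    proof (intro allI impI)
      fix t assume t: "t \<in> {0..x}"
      have H: "(LINT s:{0..t}|lborel. h s) = y' t - c" using yeq[of t] t by (simp add: h_def c_def)
      show "\<i>*\<kappa>*E t * (LINT s:{0..t}|lborel. h s) = \<i>*\<kappa>*(E t * y' t) - \<i>*\<kappa>*c * E t"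
        unfolding H by (simp add: algebra_simps)
    qed
  qed simp
  also have "\<dots> = \<i>*\<kappa>*(LINT t:{0..x}|lborel. E t * y' t) - \<i>*\<kappa>*c*(LINT t:{0..x}|lborel. E t)"
    using Ey'i Ei by (subst set_integral_diff(2)) auto
  finally have R: "(LINT t:{0..x}|lborel. \<i>*\<kappa>*E t * (LINT s:{0..t}|lborel. h s)) =
     \<i>*\<kappa>*(LINT t:{0..x}|lborel. E t * y' t) - \<i>*\<kappa>*c*(LINT t:{0..x}|lborel. E t)" .
  have F5: "(LINT t:{0..x}|lborel. \<i>*\<kappa>*E t) = E x - E 0"
    using x by (intro FTC_LINT Ed continuous_intros Ec) auto
  have F4: "(LINT t:{0..x}|lborel. E t * y' t + \<i>*\<kappa>*E t * y t) = E x * y x - E 0 * y 0"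
  proof (rule FTC_LINT[OF x])
    show "continuous_on {0..x} (\<lambda>t. E t * y' t + \<i> * \<kappa> * E t * y t)"
      by (intro continuous_intros Ec y'c ycont) simp
    fix t assume t: "t \<in> {0..x}"
    show "((\<lambda>t. E t * y t) has_vector_derivative E t * y' t + \<i> * \<kappa> * E t * y t) (at t within {0..x})"
      using has_vector_derivative_mult[OF Ed yd'[OF t]] by simp
  qed
  have F4': "(LINT t:{0..x}|lborel. E t * y' t) = E x * y x - \<i>*\<kappa>*(LINT t:{0..x}|lborel. E t * y t)"
    using F4 Ey'i Eyi by (subst (asm) set_integral_add(2)) (auto simp: y0 mult.assoc eq_diff_eq)
  have F6: "(LINT t:{0..x}|lborel. E t * (q t * y t)) = (LINT t:{0..x}|lborel. E t * h t) + lam * (LINT t:{0..x}|lborel. E t * y t)"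
  proof -
    have "(LINT t:{0..x}|lborel. E t * (q t * y t)) = (LINT t:{0..x}|lborel. E t * h t + lam * (E t * y t))"
      by (rule set_lebesgue_integral_cong) (auto simp: h_def algebra_simps)
    also have "\<dots> = (LINT t:{0..x}|lborel. E t * h t) + lam * (LINT t:{0..x}|lborel. E t * y t)"
      using Ehi Eyi by (subst set_integral_add(2)) auto
    finally show ?thesis .
  qed
  have E0: "E 0 = 1" by (simp add: E_def)
  have "\<i>*\<kappa>*(LINT t:{0..x}|lborel. E t) = E x - 1" using F5 E0 by simp
  from alg_lemma[OF F1[unfolded L R] F4' this F6 kap]
  have "(LINT t:{0..x}|lborel. E t * (q t * y t)) = E x * (y' x - \<i>*\<kappa>* y x) - c" .
  then show ?thesis by (simp add: E_def c_def)
qed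

end

definition EE :: "complex \<Rightarrow> real \<Rightarrow> complex" where
  "EE k s = exp (\<i> * k * of_real s)"

lemma EE_add: "EE k a * EE k b = EE k (a + b)"
  by (simp add: EE_def exp_add[symmetric] algebra_simps)

lemma EE_0[simp]: "EE k 0 = 1" by (simp add: EE_def)

lemma norm_EE: "cmod (EE k a) = exp (- Im k * a)"
  by (simp add: EE_def)

lemma norm_EE_le1: "Im k \<ge> 0 \<Longrightarrow> a \<ge> 0 \<Longrightarrow> cmod (EE k a) \<le> 1"
  by (simp add: norm_EE)

lemma EE_sub1_lin:
  assumes k: "Im k \<ge> 0" and a: "a \<ge> 0"
  shows "cmod (EE k a - 1) \<le> cmod k * a"
proof -
  have d: "(EE k has_vector_derivative (\<i>*k*EE k t)) (at t within {0..a})" for t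
    unfolding EE_def using exp_vderiv[of "\<i>*k" t "{0..a}"] by simp
  have I: "((\<lambda>t. \<i>*k*EE k t) has_integral (EE k a - EE k 0)) {0..a}"
    by (rule fundamental_theorem_of_calculus[OF a]) (use d in auto)
  have "cmod (EE k a - EE k 0) \<le> cmod k * Henstock_Kurzweil_Integration.content {0..a}"
  proof (rule has_integral_bound_real[OF _ finite.emptyI I])
    show "0 \<le> cmod k" by simp
    fix t assume "t \<in> {0..a} - {}"
    then have "cmod (EE k t) \<le> 1" using norm_EE_le1[OF k] by auto
    then show "cmod (\<i> * k * EE k t) \<le> cmod k"
      by (simp add: norm_mult mult_left_le)
  qed
  then show ?thesis using a by simp
qed

lemma EE_sub1_2:
  assumes k: "Im k \<ge> 0" and a: "a \<ge> 0"
  shows "cmod (EE k a - 1) \<le> 2"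
proof -
  have "cmod (EE k a - 1) \<le> cmod (EE k a) + 1" by (metis norm_one norm_triangle_ineq4)
  then show ?thesis using norm_EE_le1[OF k a] by simp
qed

lemma kernel_bound:
  assumes k: "Im k > 0" and s: "s \<ge> 0" and d: "d \<ge> 0"
  shows "cmod (EE k d * (EE k (2 * s) - 1) / (2*\<i>*k)) \<le> exp (- Im k * d) * min s (1 / cmod k)"
proof -
  have k0: "k \<noteq> 0" using k by auto
  have "cmod (EE k (2 * s) - 1) \<le> min (2 * (cmod k * s)) 2"
    using EE_sub1_lin[of k "2 * s"] EE_sub1_2[of k "2 * s"] k s by auto
  also have "\<dots> = 2 * cmod k * min s (1 / cmod k)"
    using k0 by (simp add: min_def field_simps)
  finally have 0: "cmod (EE k (2 * s) - 1) \<le> min s (1 / cmod k) * (2 * cmod k)" by (simp add: mult_ac)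
  have 2: "0 < 2 * cmod k" using k0 by simp
  have 1: "cmod (EE k (2 * s) - 1) / (2 * cmod k) \<le> min s (1 / cmod k)"
    using 0 pos_divide_le_eq[OF 2] by blast
  have "cmod (EE k d * (EE k (2 * s) - 1) / (2*\<i>*k)) = exp (- Im k * d) * (cmod (EE k (2 * s) - 1) / (2 * cmod k))"
    by (simp add: norm_mult norm_divide norm_EE)
  also have "\<dots> \<le> exp (- Im k * d) * min s (1 / cmod k)"
    by (rule mult_left_mono[OF 1]) simp
  finally show ?thesis .
qed

definition Sf :: "complex \<Rightarrow> real \<Rightarrow> complex" where
  "Sf k x = (EE k x - EE k (-x)) / (2 * \<i> * k)"
definition G1 :: "complex \<Rightarrow> real \<Rightarrow> real \<Rightarrow> complex" where
  "G1 k x s = EE k x * (EE k s - EE k (-s)) / (2 * \<i> * k)"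
definition G2 :: "complex \<Rightarrow> real \<Rightarrow> real \<Rightarrow> complex" where
  "G2 k x s = EE k s * (EE k x - EE k (-x)) / (2 * \<i> * k)"

lemma EE_cont: "continuous_on S (EE k)"
  unfolding EE_def by (intro continuous_intros)

lemma EE_cont': "continuous_on S (\<lambda>s. EE k (- s))"
  unfolding EE_def by (intro continuous_intros)

lemma EE_neg: "EE (-k) s = EE k (-s)" by (simp add: EE_def)

lemma rep_alg:
  fixes ex em c I1 I2 J yx y'x AX k :: complex
  assumes "ex * em = 1" "k \<noteq> 0"
    "ex * (y'x - \<i>*k*yx) = c + I1" "em * (y'x + \<i>*k*yx) = c + I2" "AX = c + I1 + J"
  shows "yx = (ex - em) / (2*\<i>*k) * AX - ex / (2*\<i>*k) * (I1 - I2) - (ex - em) / (2*\<i>*k) * J"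
proof -
  have "(ex - em) * AX - ex * (I1 - I2) - (ex - em) * J = ex * (c + I2) - em * (c + I1)"
    using assms(5) by (simp add: algebra_simps)
  also have "\<dots> = ex * em * (y'x + \<i>*k*yx) - em * ex * (y'x - \<i>*k*yx)"
    using assms(3,4) by (simp add: mult.assoc)
  also have "\<dots> = 2*\<i>*k*yx" using assms(1) by (simp add: algebra_simps)
  finally have H: "(ex - em) * AX - ex * (I1 - I2) - (ex - em) * J = 2*\<i>*k*yx" .
  have "yx = ((ex - em) * AX - ex * (I1 - I2) - (ex - em) * J) / (2*\<i>*k)"
    unfolding H using assms(2) by simp
  moreover have "(ex - em) / (2*\<i>*k) * AX - ex / (2*\<i>*k) * (I1 - I2) - (ex - em) / (2*\<i>*k) * J =
     ((ex - em) * AX - ex * (I1 - I2) - (ex - em) * J) / (2*\<i>*k)"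
    using assms(2) by (simp add: field_simps)
  ultimately show ?thesis by simp
qed

locale eig = odesol +
  fixes k :: complex
  assumes lamk: "lam = k^2" and kim: "Im k > 0"
begin

lemma k0: "k \<noteq> 0" using kim by auto

lemma gEi: "0 \<le> a \<Longrightarrow> a \<le> b \<Longrightarrow> set_integrable lborel {a..b} (\<lambda>s. \<phi> s * (q s * y s))" if "continuous_on {a..b} \<phi>"
  by (rule sint_cont_mult[OF set_integrable_subset[OF gint[of b]] that]) auto

lemma rep:
  assumes x: "0 \<le> x" and xX: "x \<le> X"
  shows "y x = Sf k x * (EE k X * (y' X - \<i>*k*y X)) - (LINT s:{0..x}|lborel. G1 k x s * (q s * y s))
               - (LINT s:{x<..X}|lborel. G2 k x s * (q s * y s))"
proof -
  define c where "c = y' 0"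
  define I1 where "I1 = (LINT s:{0..x}|lborel. EE k s * (q s * y s))"
  define I2 where "I2 = (LINT s:{0..x}|lborel. EE k (-s) * (q s * y s))"
  define J where "J = (LINT s:{x<..X}|lborel. EE k s * (q s * y s))"
  have X: "0 \<le> X" using x xX by simp
  have Ap: "EE k x * (y' x - \<i>*k*y x) = c + I1"
    using A_formula[OF x, of k] lamk unfolding EE_def I1_def c_def by simp
  have Am: "EE k (-x) * (y' x + \<i>*k*y x) = c + I2"
    using A_formula[OF x, of "-k"] lamk unfolding I2_def c_def by (simp add: EE_def)
  have AX0: "EE k X * (y' X - \<i>*k*y X) = c + (LINT s:{0..X}|lborel. EE k s * (q s * y s))"
    using A_formula[OF X, of k] lamk unfolding EE_def c_def by simp
  have iX: "set_integrable lborel {0..X} (\<lambda>s. EE k s * (q s * y s))"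
    by (rule gEi[OF EE_cont order.refl X])
  have "{0..X} = {0..x} \<union> {x<..X}" using x xX by auto
  then have "(LINT s:{0..X}|lborel. EE k s * (q s * y s)) = I1 + J"
    unfolding I1_def J_def
    by (simp only:) (rule set_integral_Un, auto intro: set_integrable_subset[OF iX])
  then have AX: "EE k X * (y' X - \<i>*k*y X) = c + I1 + J" using AX0 by simp
  have i1: "set_integrable lborel {0..x} (\<lambda>s. EE k s * (q s * y s))"
    by (rule gEi[OF EE_cont order.refl x])
  have i2: "set_integrable lborel {0..x} (\<lambda>s. EE k (-s) * (q s * y s))"
    by (rule gEi[OF EE_cont' order.refl x])
  have "(LINT s:{0..x}|lborel. G1 k x s * (q s * y s)) =
        (LINT s:{0..x}|lborel. EE k x / (2*\<i>*k) * (EE k s * (q s * y s) - EE k (-s) * (q s * y s)))"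
    using k0 by (intro set_lebesgue_integral_cong) (auto simp: G1_def field_simps)
  also have "\<dots> = EE k x / (2*\<i>*k) * (I1 - I2)"
    unfolding set_integral_mult_right I1_def I2_def using i1 i2 by (subst set_integral_diff(2)) auto
  finally have G1eq: "(LINT s:{0..x}|lborel. G1 k x s * (q s * y s)) = EE k x / (2*\<i>*k) * (I1 - I2)" .
  have "(LINT s:{x<..X}|lborel. G2 k x s * (q s * y s)) = (LINT s:{x<..X}|lborel. Sf k x * (EE k s * (q s * y s)))"
    by (rule set_lebesgue_integral_cong) (auto simp: G2_def Sf_def algebra_simps)
  also have "\<dots> = Sf k x * J" unfolding J_def by simp
  finally have G2eq: "(LINT s:{x<..X}|lborel. G2 k x s * (q s * y s)) = Sf k x * J" .
  have ee: "EE k x * EE k (-x) = 1" by (simp add: EE_add)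
  show ?thesis
    unfolding G1eq G2eq Sf_def
    by (rule rep_alg[OF ee k0 Ap Am AX])
qed

lemma norm_diff3: "norm (a - b - c) \<le> norm a + norm b + norm (c::complex)"
  using norm_triangle_ineq4[of "a - b" c] norm_triangle_ineq4[of a b] by linarith

lemma EE_shift: "EE k a * (EE k b - EE k (-b)) = EE k (a - b) * (EE k (2 * b) - 1)"
proof -
  have 1: "EE k (a - b) * EE k (2 * b) = EE k (a + b)" by (simp add: EE_add add.commute)
  have 2: "EE k a * EE k b = EE k (a + b)" by (rule EE_add)
  have 3: "EE k a * EE k (-b) = EE k (a - b)" by (simp add: EE_add)
  have "EE k a * (EE k b - EE k (-b)) = EE k a * EE k b - EE k a * EE k (-b)" by (rule right_diff_distrib)
  also have "\<dots> = EE k (a - b) * EE k (2 * b) - EE k (a - b)" unfolding 1 2 3 ..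
  also have "\<dots> = EE k (a - b) * (EE k (2 * b) - 1)" by (simp add: right_diff_distrib)
  finally show ?thesis .
qed

lemma ybound:
  assumes x: "0 \<le> x" and xX: "x \<le> X"
  shows "cmod (y x) \<le> min x (1 / cmod k) * (exp (- Im k * (X - x)) * cmod (y' X - \<i>*k*y X)
            + (LINT s:{0..X}|lborel. cmod (q s * y s)))"
proof -
  define m where "m = min x (1 / cmod k)"
  define W where "W = cmod (y' X - \<i>*k*y X)"
  have X: "0 \<le> X" using x xX by simp
  have m0: "m \<ge> 0" unfolding m_def using x by simp
  have gi: "set_integrable lborel {0..X} (\<lambda>s. q s * y s)" by (rule gint[OF X])
  have ngi: "set_integrable lborel {0..X} (\<lambda>s. cmod (q s * y s))" by (rule set_integrable_norm[OF gi])
  have ngi1: "set_integrable lborel {0..x} (\<lambda>s. cmod (q s * y s))"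
    by (rule set_integrable_subset[OF ngi]) (use xX in auto)
  have ngi2: "set_integrable lborel {x<..X} (\<lambda>s. cmod (q s * y s))"
    by (rule set_integrable_subset[OF ngi]) (use x in auto)
  have split: "(LINT s:{0..X}|lborel. cmod (q s * y s)) = (LINT s:{0..x}|lborel. cmod (q s * y s)) + (LINT s:{x<..X}|lborel. cmod (q s * y s))"
  proof -
    have "{0..X} = {0..x} \<union> {x<..X}" using x xX by auto
    then show ?thesis by (simp only:) (rule set_integral_Un[OF _ ngi1 ngi2], auto)
  qed
  have T1: "cmod (Sf k x * (EE k X * (y' X - \<i>*k*y X))) \<le> m * (exp (- Im k * (X - x)) * W)"
  proof -
    have "Sf k x * (EE k X * (y' X - \<i>*k*y X)) = (EE k X * (EE k x - EE k (-x)) / (2*\<i>*k)) * (y' X - \<i>*k*y X)"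
      by (simp add: Sf_def)
    also have "\<dots> = (EE k (X - x) * (EE k (2 * x) - 1) / (2*\<i>*k)) * (y' X - \<i>*k*y X)"
      by (simp only: EE_shift)
    finally have e: "Sf k x * (EE k X * (y' X - \<i>*k*y X)) = (EE k (X - x) * (EE k (2 * x) - 1) / (2*\<i>*k)) * (y' X - \<i>*k*y X)" .
    have "cmod (EE k (X - x) * (EE k (2 * x) - 1) / (2*\<i>*k)) \<le> exp (- Im k * (X - x)) * m"
      unfolding m_def by (rule kernel_bound[OF kim x]) (use xX in simp)
    then show ?thesis unfolding e norm_mult W_def
      by (metis mult.commute mult.left_commute mult_right_mono norm_ge_zero)
  qed
  have G1c: "continuous_on {0..x} (G1 k x)"
    unfolding G1_def by (intro continuous_intros EE_cont EE_cont') (use k0 in simp)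
  have i1: "set_integrable lborel {0..x} (\<lambda>s. G1 k x s * (q s * y s))"
    by (rule gEi[OF G1c order.refl x])
  have T2: "cmod (LINT s:{0..x}|lborel. G1 k x s * (q s * y s)) \<le> m * (LINT s:{0..x}|lborel. cmod (q s * y s))"
  proof -
    have "cmod (LINT s:{0..x}|lborel. G1 k x s * (q s * y s)) \<le> (LINT s:{0..x}|lborel. cmod (G1 k x s * (q s * y s)))"
      by (rule set_integral_norm_bound[OF i1])
    also have "\<dots> \<le> (LINT s:{0..x}|lborel. m * cmod (q s * y s))"
    proof (rule set_integral_mono)
      show "set_integrable lborel {0..x} (\<lambda>s. cmod (G1 k x s * (q s * y s)))" by (rule set_integrable_norm[OF i1])
      show "set_integrable lborel {0..x} (\<lambda>s. m * cmod (q s * y s))" using ngi1 by simp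
      fix s assume s: "s \<in> {0..x}"
      have "G1 k x s = EE k (x - s) * (EE k (2 * s) - 1) / (2*\<i>*k)"
        unfolding G1_def by (simp only: EE_shift)
      also have "cmod \<dots> \<le> exp (- Im k * (x - s)) * min s (1 / cmod k)"
        by (rule kernel_bound[OF kim]) (use s in auto)
      also have "\<dots> \<le> 1 * m" unfolding m_def
        using s kim by (intro mult_mono) (auto simp: min_def)
      finally have "cmod (G1 k x s) \<le> m" by simp
      then show "cmod (G1 k x s * (q s * y s)) \<le> m * cmod (q s * y s)"
        unfolding norm_mult[of "G1 k x s"] by (intro mult_right_mono) auto
    qed
    also have "\<dots> = m * (LINT s:{0..x}|lborel. cmod (q s * y s))" by simp
    finally show ?thesis .
  qed
  have G2c: "continuous_on {x..X} (G2 k x)"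
    unfolding G2_def by (intro continuous_intros EE_cont EE_cont') (use k0 in simp)
  have i2: "set_integrable lborel {x<..X} (\<lambda>s. G2 k x s * (q s * y s))"
    by (rule set_integrable_subset[OF gEi[OF G2c x xX]]) auto
  have T3: "cmod (LINT s:{x<..X}|lborel. G2 k x s * (q s * y s)) \<le> m * (LINT s:{x<..X}|lborel. cmod (q s * y s))"
  proof -
    have "cmod (LINT s:{x<..X}|lborel. G2 k x s * (q s * y s)) \<le> (LINT s:{x<..X}|lborel. cmod (G2 k x s * (q s * y s)))"
      by (rule set_integral_norm_bound[OF i2])
    also have "\<dots> \<le> (LINT s:{x<..X}|lborel. m * cmod (q s * y s))"
    proof (rule set_integral_mono)
      show "set_integrable lborel {x<..X} (\<lambda>s. cmod (G2 k x s * (q s * y s)))" by (rule set_integrable_norm[OF i2])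
      show "set_integrable lborel {x<..X} (\<lambda>s. m * cmod (q s * y s))" using ngi2 by simp
      fix s assume s: "s \<in> {x<..X}"
      have "G2 k x s = EE k (s - x) * (EE k (2 * x) - 1) / (2*\<i>*k)"
        unfolding G2_def by (simp only: EE_shift)
      also have "cmod \<dots> \<le> exp (- Im k * (s - x)) * m"
        unfolding m_def by (rule kernel_bound[OF kim]) (use s x in auto)
      also have "\<dots> \<le> 1 * m"
        using s kim m0 by (intro mult_right_mono) auto
      finally have "cmod (G2 k x s) \<le> m" by simp
      then show "cmod (G2 k x s * (q s * y s)) \<le> m * cmod (q s * y s)"
        unfolding norm_mult[of "G2 k x s"] by (intro mult_right_mono) auto
    qed
    also have "\<dots> = m * (LINT s:{x<..X}|lborel. cmod (q s * y s))" by simp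
    finally show ?thesis .
  qed
  have "cmod (y x) \<le> cmod (Sf k x * (EE k X * (y' X - \<i>*k*y X))) + cmod (LINT s:{0..x}|lborel. G1 k x s * (q s * y s))
        + cmod (LINT s:{x<..X}|lborel. G2 k x s * (q s * y s))"
    unfolding rep[OF x xX] by (rule norm_diff3)
  also have "\<dots> \<le> m * (exp (- Im k * (X - x)) * W) + m * (LINT s:{0..x}|lborel. cmod (q s * y s))
        + m * (LINT s:{x<..X}|lborel. cmod (q s * y s))"
    using T1 T2 T3 by linarith
  also have "\<dots> = m * (exp (- Im k * (X - x)) * W + (LINT s:{0..X}|lborel. cmod (q s * y s)))"
    unfolding split by (simp add: algebra_simps)
  finally show ?thesis unfolding m_def W_def .
qed

end

lemma cont_LINT_eq_real:
  fixes f :: "real \<Rightarrow> real"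
  assumes "continuous_on {a..b} f"
  shows "set_integrable lborel {a..b} f" "(LINT t:{a..b}|lborel. f t) = integral {a..b} f"
proof -
  show 1: "set_integrable lborel {a..b} f"
    unfolding set_integrable_def using borel_integrable_compact[OF compact_Icc assms] .
  show "(LINT t:{a..b}|lborel. f t) = integral {a..b} f"
    using set_borel_integral_eq_integral(2)[OF 1] .
qed

lemma set_integral_mono_set:
  fixes f :: "real \<Rightarrow> real"
  assumes "set_integrable lborel B f" "A \<subseteq> B" "A \<in> sets lborel" "\<And>x. x \<in> B \<Longrightarrow> 0 \<le> f x"
  shows "(LINT x:A|lborel. f x) \<le> (LINT x:B|lborel. f x)"
proof -
  have iA: "set_integrable lborel A f" by (rule set_integrable_subset[OF assms(1,3,2)])
  show ?thesis
    using iA assms(1) unfolding set_lebesgue_integral_def set_integrable_def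
    by (intro integral_mono) (use assms(2,4) in \<open>auto simp: indicator_def\<close>)
qed

lemma LINT_const_Icc:
  fixes c :: real
  assumes "a \<le> b"
  shows "(LINT t:{a..b}|lborel. c) = (b - a) * c"
  using cont_LINT_eq_real(2)[of a b "\<lambda>_. c"] assms by simp

locale eig2 = eig +
  fixes M :: real
  assumes L2: "set_integrable lborel {0..} (\<lambda>t. (cmod (y t))\<^sup>2)"
  and mint: "set_integrable lborel {0<..} (\<lambda>s. min s (1 / cmod k) * cmod (q s))"
  and Mdef: "M = (LINT s:{0<..}|lborel. min s (1 / cmod k) * cmod (q s))"
  and Mlt: "M < 1"
begin

definition r where "r = 1 / cmod k"
definition N2 where "N2 = (LINT t:{0..}|lborel. (cmod (y t))\<^sup>2)"
definition E1 where "E1 = (1 + N2) / 2"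
definition u where "u s = cmod (y s) / min s r"
definition V where "V X = Sup (u ` {0<..X})"

lemma r_pos: "r > 0" unfolding r_def using k0 by simp
lemma kr: "cmod k * r = 1" unfolding r_def using k0 by simp

lemma N2_nonneg: "N2 \<ge> 0"
  unfolding N2_def set_lebesgue_integral_def by (intro integral_nonneg_AE) (auto simp: indicator_def)

lemma M_nonneg: "M \<ge> 0"
  unfolding Mdef set_lebesgue_integral_def by (intro integral_nonneg_AE) (auto simp: indicator_def)

lemma Mb:
  assumes A: "A \<in> sets lborel" "A \<subseteq> {0..}"
  shows "set_integrable lborel A (\<lambda>s. min s r * cmod (q s))"
    "(LINT s:A|lborel. min s r * cmod (q s)) \<le> M"
proof -
  define f where "f s = min s r * cmod (q s)" for s
  have f0: "f 0 = 0" unfolding f_def using r_pos by simp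
  have mi: "set_integrable lborel {0<..} f" using mint unfolding f_def r_def .
  have eq: "indicator A s *\<^sub>R f s = indicator (A \<inter> {0<..}) s *\<^sub>R f s" for s
    using A f0 by (cases "s = 0") (auto simp: indicator_def)
  have sub: "set_integrable lborel (A \<inter> {0<..}) f"
    by (rule set_integrable_subset[OF mi]) (use A in auto)
  show 1: "set_integrable lborel A (\<lambda>s. min s r * cmod (q s))"
    using sub unfolding set_integrable_def f_def[symmetric] eq .
  have "(LINT s:A|lborel. f s) = (LINT s:A \<inter> {0<..}|lborel. f s)"
    unfolding set_lebesgue_integral_def eq ..
  also have "\<dots> \<le> (LINT s:{0<..}|lborel. f s)"
    by (rule set_integral_mono_set[OF mi]) (use A r_pos in \<open>auto simp: f_def\<close>)
  also have "\<dots> = M" unfolding Mdef f_def r_def ..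
  finally show "(LINT s:A|lborel. min s r * cmod (q s)) \<le> M" unfolding f_def .
qed

lemma L2_window:
  assumes "0 \<le> a" "a \<le> b"
  shows "(LINT t:{a..b}|lborel. (cmod (y t))\<^sup>2) \<le> N2"
  unfolding N2_def by (rule set_integral_mono_set[OF L2]) (use assms in auto)

lemma ycont_real: "0 \<le> a \<Longrightarrow> continuous_on {a..b} (\<lambda>t. cmod (y t))"
  by (intro continuous_intros ycont)

lemma abs_window:
  assumes "0 \<le> a"
  shows "(LINT t:{a..a+1}|lborel. cmod (y t)) \<le> E1"
proof -
  have c1: "continuous_on {a..a+1} (\<lambda>t. cmod (y t))" by (rule ycont_real[OF assms])
  have c2: "continuous_on {a..a+1} (\<lambda>t. (1 + (cmod (y t))\<^sup>2) / 2)" by (intro continuous_intros ycont assms) simp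
  have c3: "continuous_on {a..a+1} (\<lambda>t. (cmod (y t))\<^sup>2)" by (intro continuous_intros ycont assms)
  have "(LINT t:{a..a+1}|lborel. cmod (y t)) \<le> (LINT t:{a..a+1}|lborel. (1 + (cmod (y t))\<^sup>2) / 2)"
  proof (rule set_integral_mono[OF cont_LINT_eq_real(1)[OF c1] cont_LINT_eq_real(1)[OF c2]])
    fix t
    have "0 \<le> (cmod (y t) - 1)\<^sup>2" by simp
    then show "cmod (y t) \<le> (1 + (cmod (y t))\<^sup>2) / 2" by (simp add: power2_eq_square algebra_simps)
  qed
  also have "\<dots> = ((LINT t:{a..a+1}|lborel. 1) + (LINT t:{a..a+1}|lborel. (cmod (y t))\<^sup>2)) / 2"
    by (subst set_integral_add(2)[symmetric]) (auto intro!: cont_LINT_eq_real(1) c3)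
  also have "\<dots> \<le> (1 + N2) / 2"
    using L2_window[of a "a+1"] assms LINT_const_Icc[of a "a+1" 1] by simp
  finally show ?thesis unfolding E1_def .
qed

lemma u_nonneg: "0 < s \<Longrightarrow> u s \<ge> 0" unfolding u_def using r_pos by auto

lemma u_bound: assumes "0 < s" "s \<le> X"
  shows "u s \<le> cmod (y' X - \<i>*k*y X) + (LINT s:{0..X}|lborel. cmod (q s * y s))"
proof -
  have m: "min s r > 0" using assms r_pos by simp
  have Q0: "(LINT s:{0..X}|lborel. cmod (q s * y s)) \<ge> 0"
    unfolding set_lebesgue_integral_def by (intro integral_nonneg_AE) (auto simp: indicator_def)
  have "cmod (y s) \<le> min s r * (exp (- Im k * (X - s)) * cmod (y' X - \<i>*k*y X) + (LINT s:{0..X}|lborel. cmod (q s * y s)))"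
    using ybound[of s X] assms unfolding r_def by simp
  also have "\<dots> \<le> min s r * (cmod (y' X - \<i>*k*y X) + (LINT s:{0..X}|lborel. cmod (q s * y s)))"
  proof (intro mult_left_mono add_right_mono)
    have "exp (- Im k * (X - s)) \<le> 1" using kim assms by simp
    then show "exp (- Im k * (X - s)) * cmod (y' X - \<i>*k*y X) \<le> cmod (y' X - \<i>*k*y X)"
      by (simp add: mult_left_le_one_le)
  qed (use m in auto)
  finally show ?thesis unfolding u_def using m by (simp add: divide_le_eq mult.commute)
qed

lemma ubdd: "bdd_above (u ` {0<..X})"
  by (rule bdd_aboveI2[where M="cmod (y' X - \<i>*k*y X) + (LINT s:{0..X}|lborel. cmod (q s * y s))"])
     (auto intro: u_bound)

lemma u_le_V: "0 < s \<Longrightarrow> s \<le> X \<Longrightarrow> u s \<le> V X"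
  unfolding V_def by (rule cSup_upper[OF _ ubdd]) auto

lemma V_nonneg: "0 < X \<Longrightarrow> 0 \<le> V X"
  using u_le_V[of X X] u_nonneg[of X] by simp

lemma V_mono: "0 < X \<Longrightarrow> X \<le> X' \<Longrightarrow> V X \<le> V X'"
  unfolding V_def by (rule cSup_subset_mono) (auto intro: ubdd)

lemma V_least: "0 < X \<Longrightarrow> (\<And>s. 0 < s \<Longrightarrow> s \<le> X \<Longrightarrow> u s \<le> B) \<Longrightarrow> V X \<le> B"
  unfolding V_def by (rule cSup_least) auto

lemma y_le_V: assumes "0 \<le> s" "s \<le> X" "0 < X"
  shows "cmod (y s) \<le> min s r * V X"
proof (cases "s = 0")
  case True then show ?thesis using y0 r_pos by simp
next
  case False
  then have s: "0 < s" using assms by simp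
  have m: "min s r > 0" using s r_pos by simp
  have m': "min s r \<noteq> 0" using m by linarith
  have "cmod (y s) = min s r * u s" unfolding u_def using m' by (simp add: field_simps)
  also have "\<dots> \<le> min s r * V X" using u_le_V[OF s assms(2)] m by simp
  finally show ?thesis .
qed

lemma y_le_rV: assumes "0 \<le> s" "s \<le> X" "0 < X"
  shows "cmod (y s) \<le> r * V X"
proof -
  have "min s r * V X \<le> r * V X" using V_nonneg[OF assms(3)] by (intro mult_right_mono) auto
  then show ?thesis using y_le_V[OF assms] by simp
qed

lemma Qb: assumes "0 \<le> a" "a \<le> b" "0 < b"
  shows "(LINT s:{a..b}|lborel. cmod (q s * y s)) \<le> M * V b"
proof -
  have gi: "set_integrable lborel {a..b} (\<lambda>s. cmod (q s * y s))"
    by (rule set_integrable_norm, rule set_integrable_subset[OF gint[of b]]) (use assms in auto)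
  have mi: "set_integrable lborel {a..b} (\<lambda>s. min s r * cmod (q s))" by (rule Mb(1)) (use assms in auto)
  have "(LINT s:{a..b}|lborel. cmod (q s * y s)) \<le> (LINT s:{a..b}|lborel. (min s r * cmod (q s)) * V b)"
  proof (rule set_integral_mono[OF gi])
    show "set_integrable lborel {a..b} (\<lambda>s. (min s r * cmod (q s)) * V b)" using mi by simp
    fix s assume s: "s \<in> {a..b}"
    have "cmod (q s * y s) = cmod (q s) * cmod (y s)" by (simp add: norm_mult)
    also have "\<dots> \<le> cmod (q s) * (min s r * V b)" by (rule mult_left_mono[OF y_le_V]) (use s assms in auto)
    finally show "cmod (q s * y s) \<le> (min s r * cmod (q s)) * V b" by (simp add: mult_ac)
  qed
  also have "\<dots> = (LINT s:{a..b}|lborel. min s r * cmod (q s)) * V b" by simp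
  also have "\<dots> \<le> M * V b"
    by (rule mult_right_mono[OF Mb(2) V_nonneg]) (use assms in auto)
  finally show ?thesis .
qed

lemma y'_bound: assumes t: "1 \<le> t"
  shows "cmod (y' t) \<le> (2*r + M) * V t + cmod lam * E1"
proof -
  define a where "a = t - 1"
  have a0: "0 \<le> a" and at: "a \<le> t" and t0: "0 < t" using t by (auto simp: a_def)
  define h where "h s = (q s - lam) * y s" for s
  define B where "B = (LINT s:{a..t}|lborel. cmod (h s))"
  have hi: "set_integrable lborel {0..t} h" unfolding h_def using hint[of t] t0 by simp
  have hai: "set_integrable lborel {a..t} (\<lambda>s. cmod (h s))"
    by (rule set_integrable_norm, rule set_integrable_subset[OF hi]) (use a0 in auto)
  have step1: "cmod (y' t - y' s) \<le> B" if s: "s \<in> {a..t}" for s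
  proof -
    have s0: "0 \<le> s" using s a0 by auto
    have "{0..t} = {0..s} \<union> {s<..t}" using s s0 by auto
    then have "(LINT u:{0..t}|lborel. h u) = (LINT u:{0..s}|lborel. h u) + (LINT u:{s<..t}|lborel. h u)"
      by (simp only:) (rule set_integral_Un, auto intro: set_integrable_subset[OF hi] simp: s0)
    moreover have "y' t = y' 0 + (LINT u:{0..t}|lborel. h u)" using yeq[of t] t0 unfolding h_def by simp
    moreover have "y' s = y' 0 + (LINT u:{0..s}|lborel. h u)" using yeq[of s] s0 unfolding h_def by simp
    ultimately have e: "y' t - y' s = (LINT u:{s<..t}|lborel. h u)" by simp
    have "cmod (LINT u:{s<..t}|lborel. h u) \<le> (LINT u:{s<..t}|lborel. cmod (h u))"
      by (rule set_integral_norm_bound, rule set_integrable_subset[OF hi]) (use s0 in auto)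
    also have "\<dots> \<le> B" unfolding B_def
      by (rule set_integral_mono_set[OF hai]) (use s in auto)
    finally show ?thesis unfolding e .
  qed
  have FTC: "(y' has_integral (y t - y a)) {a..t}"
    by (rule fundamental_theorem_of_calculus[OF at]) (rule yd', auto simp: a0)
  have I: "((\<lambda>s. y' t - y' s) has_integral (y' t - (y t - y a))) {a..t}"
    using has_integral_diff[OF has_integral_const_real[of "y' t" a t] FTC] at by (simp add: a_def)
  have B0: "0 \<le> B" unfolding B_def set_lebesgue_integral_def
    by (intro integral_nonneg_AE) (auto simp: indicator_def)
  have "cmod (y' t - (y t - y a)) \<le> B * Henstock_Kurzweil_Integration.content {a..t}"
    by (rule has_integral_bound_real[OF B0 finite.emptyI I]) (use step1 in auto)
  then have st3: "cmod (y' t - (y t - y a)) \<le> B" using at by (simp add: a_def)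
  have st4: "cmod (y' t) \<le> cmod (y t) + cmod (y a) + B"
  proof -
    have "cmod (y' t) \<le> cmod (y' t - (y t - y a)) + cmod (y t - y a)" using norm_triangle_ineq[of "y' t - (y t - y a)" "y t - y a"] by simp
    also have "cmod (y t - y a) \<le> cmod (y t) + cmod (y a)" by (rule norm_triangle_ineq4)
    finally show ?thesis using st3 by linarith
  qed
  have qyi: "set_integrable lborel {a..t} (\<lambda>s. cmod (q s * y s))"
    by (rule set_integrable_norm, rule set_integrable_subset[OF gint[of t]]) (use a0 at in auto)
  have yi: "set_integrable lborel {a..t} (\<lambda>s. cmod (y s))"
    by (rule cont_LINT_eq_real(1)[OF ycont_real[OF a0]])
  have "B \<le> (LINT s:{a..t}|lborel. cmod (q s * y s) + cmod lam * cmod (y s))"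
    unfolding B_def
  proof (rule set_integral_mono[OF hai])
    show "set_integrable lborel {a..t} (\<lambda>s. cmod (q s * y s) + cmod lam * cmod (y s))"
      using qyi yi by (intro set_integral_add(1)) auto
    fix s
    have "h s = q s * y s - lam * y s" unfolding h_def by (simp add: algebra_simps)
    then show "cmod (h s) \<le> cmod (q s * y s) + cmod lam * cmod (y s)"
      using norm_triangle_ineq4[of "q s * y s" "lam * y s"] by (simp add: norm_mult)
  qed
  also have "\<dots> = (LINT s:{a..t}|lborel. cmod (q s * y s)) + cmod lam * (LINT s:{a..t}|lborel. cmod (y s))"
    using qyi yi by (subst set_integral_add(2)) auto
  also have "\<dots> \<le> M * V t + cmod lam * E1"
  proof (rule add_mono)
    show "(LINT s:{a..t}|lborel. cmod (q s * y s)) \<le> M * V t" by (rule Qb[OF a0 at t0])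
    have "(LINT s:{a..t}|lborel. cmod (y s)) \<le> E1" using abs_window[OF a0] by (simp add: a_def)
    then show "cmod lam * (LINT s:{a..t}|lborel. cmod (y s)) \<le> cmod lam * E1" by (simp add: mult_left_mono)
  qed
  finally have B: "B \<le> M * V t + cmod lam * E1" .
  have "cmod (y t) \<le> r * V t" by (rule y_le_rV) (use t0 in auto)
  moreover have "cmod (y a) \<le> r * V t" by (rule y_le_rV[OF a0 at t0])
  ultimately show ?thesis using st4 B by (simp add: algebra_simps)
qed

lemma E1_nonneg: "E1 \<ge> 0" unfolding E1_def using N2_nonneg by simp

lemma y_pointwise: assumes x: "2 \<le> x"
  shows "(cmod (y x))\<^sup>2 \<le> N2 + 1 + 2 * E1 * ((2*r + M) * V x + cmod lam * E1)"
proof -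
  define P where "P = (2*r + M) * V x + cmod lam * E1"
  have x0: "0 < x" using x by simp
  have P0: "0 \<le> P" unfolding P_def using V_nonneg[OF x0] r_pos M_nonneg E1_nonneg by simp
  have Pb: "cmod (y' s) \<le> P" if s: "s \<in> {x-1..x}" for s
  proof -
    have "cmod (y' s) \<le> (2*r + M) * V s + cmod lam * E1" by (rule y'_bound) (use s x in auto)
    also have "\<dots> \<le> P" unfolding P_def
      using V_mono[of s x] s x r_pos M_nonneg by (intro add_right_mono mult_left_mono) auto
    finally show ?thesis .
  qed
  obtain t where t: "t \<in> {x-1..x}" and yt: "(cmod (y t))\<^sup>2 \<le> N2 + 1"
  proof (rule ccontr)
    assume "\<not> thesis"
    with that have H: "\<And>t. t \<in> {x-1..x} \<Longrightarrow> N2 + 1 < (cmod (y t))\<^sup>2" by force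
    have c: "continuous_on {x-1..x} (\<lambda>t. (cmod (y t))\<^sup>2)" by (intro continuous_intros ycont) (use x in simp)
    have "(LINT t:{x-1..x}|lborel. N2 + 1) \<le> (LINT t:{x-1..x}|lborel. (cmod (y t))\<^sup>2)"
      by (rule set_integral_mono[OF cont_LINT_eq_real(1) cont_LINT_eq_real(1)[OF c]])
         (auto intro: less_imp_le[OF H])
    also have "\<dots> \<le> N2" by (rule L2_window) (use x in auto)
    finally show False using LINT_const_Icc[of "x-1" x "N2+1"] by simp
  qed
  have t0: "0 \<le> t" and tx: "t \<le> x" using t x by auto
  define F where "F s = y s * cnj (y' s) + y' s * cnj (y s)" for s
  have FTC: "(F has_integral (y x * cnj (y x) - y t * cnj (y t))) {t..x}"
    unfolding F_def
  proof (rule fundamental_theorem_of_calculus[OF tx])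
    fix s assume s: "s \<in> {t..x}"
    show "((\<lambda>s. y s * cnj (y s)) has_vector_derivative y s * cnj (y' s) + y' s * cnj (y s)) (at s within {t..x})"
      by (rule has_vector_derivative_mult[OF yd'[OF s t0] has_vector_derivative_cnj[OF yd'[OF s t0]]])
  qed
  have gc: "continuous_on S (\<lambda>s. 2 * P * cmod (y s))" if "S \<subseteq> {0..x}" for S
    by (rule continuous_on_subset[OF _ that]) (intro continuous_intros ycont_real, simp)
  have "cmod (y x * cnj (y x) - y t * cnj (y t)) = cmod (integral {t..x} F)"
    using FTC by (simp add: integral_unique)
  also have "\<dots> \<le> integral {t..x} (\<lambda>s. 2 * P * cmod (y s))"
  proof (rule integral_norm_bound_integral)
    show "F integrable_on {t..x}" using FTC by blast
    show "(\<lambda>s. 2 * P * cmod (y s)) integrable_on {t..x}"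
      by (rule integrable_continuous_interval[OF gc]) (use t0 in auto)
    fix s assume s: "s \<in> {t..x}"
    have "cmod (F s) \<le> cmod (y s * cnj (y' s)) + cmod (y' s * cnj (y s))"
      unfolding F_def by (rule norm_triangle_ineq)
    also have "\<dots> = 2 * (cmod (y' s) * cmod (y s))" by (simp add: norm_mult)
    also have "\<dots> \<le> 2 * (P * cmod (y s))"
      using Pb[of s] s t by (intro mult_left_mono mult_right_mono) auto
    finally show "cmod (F s) \<le> 2 * P * cmod (y s)" by simp
  qed
  also have "\<dots> \<le> integral {x-1..x} (\<lambda>s. 2 * P * cmod (y s))"
  proof (rule integral_subset_le)
    show "{t..x} \<subseteq> {x-1..x}" using t by auto
    show "(\<lambda>s. 2 * P * cmod (y s)) integrable_on {t..x}"
      by (rule integrable_continuous_interval[OF gc]) (use t0 in auto)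
    show "(\<lambda>s. 2 * P * cmod (y s)) integrable_on {x-1..x}"
      by (rule integrable_continuous_interval[OF gc]) (use x in auto)
  qed (use P0 in auto)
  also have "\<dots> = 2 * P * integral {x-1..x} (\<lambda>s. cmod (y s))" by simp
  also have "integral {x-1..x} (\<lambda>s. cmod (y s)) = (LINT s:{x-1..x}|lborel. cmod (y s))"
    by (rule cont_LINT_eq_real(2)[symmetric], rule ycont_real) (use x in auto)
  also have "\<dots> \<le> E1" using abs_window[of "x-1"] x by simp
  finally have D: "cmod (y x * cnj (y x) - y t * cnj (y t)) \<le> 2 * P * E1" using P0 by (simp add: mult_left_mono)
  have "(cmod (y x))\<^sup>2 - (cmod (y t))\<^sup>2 = Re (y x * cnj (y x) - y t * cnj (y t))"
    by (simp flip: complex_norm_square)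
  also have "\<dots> \<le> cmod (y x * cnj (y x) - y t * cnj (y t))" by (rule complex_Re_le_cmod)
  finally show ?thesis using D yt unfolding P_def by (simp add: algebra_simps)
qed

lemma u_main: assumes x: "0 < x" "x \<le> X" and X: "1 \<le> X"
  shows "u x \<le> exp (- Im k * (X - x)) * ((2*r + M + 1) * V X + cmod lam * E1) + M * V X"
proof -
  have X0: "0 < X" using X by simp
  have W: "cmod (y' X - \<i>*k*y X) \<le> (2*r + M + 1) * V X + cmod lam * E1"
  proof -
    have "cmod (y' X - \<i>*k*y X) \<le> cmod (y' X) + cmod (\<i>*k*y X)" by (rule norm_triangle_ineq4)
    also have "cmod (\<i>*k*y X) = cmod k * cmod (y X)" by (simp add: norm_mult)
    also have "cmod k * cmod (y X) \<le> cmod k * (r * V X)"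
      by (rule mult_left_mono[OF y_le_rV]) (use X0 in auto)
    also have "cmod k * (r * V X) = V X" using kr by (simp add: mult.assoc[symmetric])
    finally show ?thesis using y'_bound[OF X] by (simp add: algebra_simps)
  qed
  have Q: "(LINT s:{0..X}|lborel. cmod (q s * y s)) \<le> M * V X" by (rule Qb) (use X0 in auto)
  have m: "min x r > 0" using x r_pos by simp
  have "cmod (y x) \<le> min x r * (exp (- Im k * (X - x)) * cmod (y' X - \<i>*k*y X) + (LINT s:{0..X}|lborel. cmod (q s * y s)))"
    using ybound[of x X] x unfolding r_def by simp
  then have "u x \<le> exp (- Im k * (X - x)) * cmod (y' X - \<i>*k*y X) + (LINT s:{0..X}|lborel. cmod (q s * y s))"
    unfolding u_def using m by (simp add: divide_le_eq mult.commute)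
  also have "\<dots> \<le> exp (- Im k * (X - x)) * ((2*r + M + 1) * V X + cmod lam * E1) + M * V X"
    using W Q by (intro add_mono mult_left_mono) auto
  finally show ?thesis .
qed

lemma V_bounded: "\<exists>K. \<forall>X>0. V X \<le> K"
proof -
  define C where "C = 2*r + M + 1"
  define C2 where "C2 = cmod lam * E1"
  define \<theta> where "\<theta> = (1 + M) / 2"
  define \<beta> where "\<beta> = Im k"
  have \<beta>: "\<beta> > 0" unfolding \<beta>_def using kim .
  have C1: "C \<ge> 1" unfolding C_def using r_pos M_nonneg by simp
  have C20: "C2 \<ge> 0" unfolding C2_def using E1_nonneg by simp
  have M1: "1 - M > 0" using Mlt by simp
  define L where "L = ln (2 * C / (1 - M)) / \<beta>"
  have gt1: "2 * C / (1 - M) > 1" using C1 M1 Mlt M_nonneg by (simp add: field_simps)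
  have L0: "L > 0" unfolding L_def using gt1 \<beta> by simp
  have eL: "exp (- \<beta> * L) * C = (1 - M) / 2"
  proof -
    have "- \<beta> * L = - ln (2 * C / (1 - M))" unfolding L_def using \<beta> by simp
    then have "exp (- \<beta> * L) = (1 - M) / (2 * C)" using gt1 C1 M1 by (simp add: exp_minus)
    then show ?thesis using C1 by simp
  qed
  define D1 where "D1 = 2 * E1 * (2*r + M) / r^2"
  define D2 where "D2 = (N2 + 1 + 2 * E1 * C2) / r^2"
  have D10: "D1 \<ge> 0" unfolding D1_def using E1_nonneg r_pos M_nonneg by simp
  have D20: "D2 \<ge> 0" unfolding D2_def using E1_nonneg N2_nonneg C20 by simp
  define K where "K = max (C2 / (1 - \<theta>)) (max 1 (D1 + D2))"
  define X0 where "X0 = L + 2 + r"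
  have big: "V X \<le> K" if XX0: "X0 \<le> X" for X
  proof (rule ccontr)
    assume "\<not> V X \<le> K"
    then have vK: "V X > K" by simp
    define v where "v = V X"
    have X1: "1 \<le> X" and X0': "0 < X" using XX0 L0 r_pos unfolding X0_def by auto
    have v1: "v > 1" and vD: "v > D1 + D2" and vC: "v > C2 / (1 - \<theta>)" using vK unfolding K_def v_def by auto
    have th: "1 - \<theta> > 0" unfolding \<theta>_def using Mlt by simp
    have a1: "\<theta> * v + C2 < v"
    proof -
      have "C2 < v * (1 - \<theta>)" using vC th by (simp add: divide_less_eq)
      then show ?thesis by (simp add: algebra_simps)
    qed
    have a2: "D1 * v + D2 < v^2"
    proof -
      have "D2 \<le> D2 * v" using D20 v1 by (simp add: mult_le_cancel_left1)
      then have "D1 * v + D2 \<le> (D1 + D2) * v" by (simp add: algebra_simps)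
      also have "\<dots> < v * v" using vD v1 by (intro mult_strict_right_mono) auto
      finally show ?thesis by (simp add: power2_eq_square)
    qed
    define b where "b = max (\<theta> * v + C2) (sqrt (D1 * v + D2))"
    have bv: "b < v"
    proof -
      have "sqrt (D1 * v + D2) < sqrt (v^2)" using a2 by (simp only: real_sqrt_less_iff)
      also have "\<dots> = v" using v1 by simp
      finally show ?thesis unfolding b_def using a1 by simp
    qed
    have "V X \<le> b"
    proof (rule V_least[OF X0'])
      fix s assume s: "0 < s" "s \<le> X"
      show "u s \<le> b"
      proof (cases "s \<le> X - L")
        case True
        have e: "exp (- Im k * (X - s)) \<le> exp (- \<beta> * L)" unfolding \<beta>_def using True kim by simp
        have e1: "exp (- Im k * (X - s)) \<le> 1" using s kim by simp
        have "u s \<le> exp (- Im k * (X - s)) * (C * v + C2) + M * v"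
          using u_main[OF s X1] unfolding C_def C2_def v_def .
        also have "\<dots> = exp (- Im k * (X - s)) * C * v + exp (- Im k * (X - s)) * C2 + M * v"
          by (simp add: algebra_simps)
        also have "\<dots> \<le> exp (- \<beta> * L) * C * v + 1 * C2 + M * v"
          using e e1 C1 C20 V_nonneg[OF X0'] unfolding v_def
          by (intro add_mono mult_right_mono) auto
        also have "\<dots> = \<theta> * v + C2" unfolding eL \<theta>_def by (simp add: field_simps)
        finally show ?thesis unfolding b_def by simp
      next
        case False
        then have s2: "2 \<le> s" and sr: "r \<le> s" using XX0 r_pos unfolding X0_def by linarith+
        have ms: "min s r = r" using sr by simp
        have "(cmod (y s))\<^sup>2 \<le> N2 + 1 + 2 * E1 * ((2*r + M) * V s + cmod lam * E1)"
          by (rule y_pointwise[OF s2])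
        also have "\<dots> \<le> N2 + 1 + 2 * E1 * ((2*r + M) * v + cmod lam * E1)"
          using V_mono[of s X] s E1_nonneg r_pos M_nonneg unfolding v_def
          by (intro add_left_mono mult_left_mono add_right_mono) auto
        finally have ys: "(cmod (y s))\<^sup>2 \<le> N2 + 1 + 2 * E1 * ((2*r + M) * v + C2)" unfolding C2_def .
        have "(u s)^2 = (cmod (y s))\<^sup>2 / r^2" unfolding u_def ms by (simp add: power_divide)
        also have "\<dots> \<le> (N2 + 1 + 2 * E1 * ((2*r + M) * v + C2)) / r^2"
          using ys r_pos by (simp add: divide_right_mono)
        also have "\<dots> = D1 * v + D2" unfolding D1_def D2_def using r_pos by (simp add: field_simps)
        finally have "(u s)^2 \<le> D1 * v + D2" .
        then have "sqrt ((u s)^2) \<le> sqrt (D1 * v + D2)" by (rule real_sqrt_le_mono)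
        then have "u s \<le> sqrt (D1 * v + D2)" using u_nonneg[OF s(1)] by simp
        then show ?thesis unfolding b_def by simp
      qed
    qed
    then show False using bv unfolding v_def by simp
  qed
  have "V X \<le> K" if X: "X > 0" for X
  proof (cases "X0 \<le> X")
    case True then show ?thesis by (rule big)
  next
    case False
    then have "V X \<le> V X0" using X by (intro V_mono) auto
    also have "\<dots> \<le> K" by (rule big) simp
    finally show ?thesis .
  qed
  then show ?thesis by blast
qed

lemma y_zero: assumes x: "0 \<le> x" shows "y x = 0"
proof (cases "x = 0")
  case True then show ?thesis using y0 by simp
next
  case False
  then have x0: "0 < x" using x by simp
  obtain K where K: "\<And>X. X > 0 \<Longrightarrow> V X \<le> K" using V_bounded by blast
  have K0: "K \<ge> 0" using K[of 1] V_nonneg[of 1] by simp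
  define U where "U = Sup (u ` {0<..})"
  have ubdd': "bdd_above (u ` {0<..})"
    by (rule bdd_aboveI2[where M=K]) (use u_le_V K in force)
  have VU: "V X \<le> U" if "X > 0" for X
    unfolding V_def U_def by (rule cSup_subset_mono) (use that ubdd' in auto)
  have U0: "U \<ge> 0" using VU[of 1] V_nonneg[of 1] by simp
  define D where "D = (2*r + M + 1) * K + cmod lam * E1"
  have D0: "D \<ge> 0" unfolding D_def using K0 r_pos M_nonneg E1_nonneg by simp
  have ux: "u s \<le> M * U" if s: "0 < s" for s
  proof (rule field_le_epsilon)
    fix e :: real assume e: "0 < e"
    define X where "X = max (max s 1) (s + ln (D / e + 1) / Im k)"
    have X1: "1 \<le> X" and sX: "s \<le> X" unfolding X_def by auto
    have X0: "0 < X" using X1 by simp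
    have pos: "D / e + 1 > 0" using D0 e by (simp add: add_nonneg_pos)
    have Eb: "exp (- Im k * (X - s)) * D \<le> e"
    proof -
      have "ln (D / e + 1) / Im k \<le> X - s" unfolding X_def by simp
      then have "ln (D / e + 1) \<le> (X - s) * Im k" using pos_divide_le_eq[OF kim] by blast
      then have "exp (- Im k * (X - s)) \<le> exp (- ln (D / e + 1))" by (simp add: mult.commute)
      also have "\<dots> = 1 / (D / e + 1)" using pos by (simp add: exp_minus inverse_eq_divide)
      finally have "exp (- Im k * (X - s)) * D \<le> 1 / (D / e + 1) * D"
        using D0 by (rule mult_right_mono)
      also have "\<dots> = D / (D / e + 1)" by simp
      also have "\<dots> \<le> e"
      proof -
        have "D \<le> e * (D / e + 1)" using e by (simp add: distrib_left)
        then show ?thesis using pos_divide_le_eq[OF pos] by blast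
      qed
      finally show ?thesis .
    qed
    have "u s \<le> exp (- Im k * (X - s)) * ((2*r + M + 1) * V X + cmod lam * E1) + M * V X"
      by (rule u_main[OF s sX X1])
    also have "\<dots> \<le> exp (- Im k * (X - s)) * D + M * U"
      unfolding D_def using K[OF X0] VU[OF X0] r_pos M_nonneg
      by (intro add_mono mult_left_mono) auto
    also have "\<dots> \<le> e + M * U" using Eb by simp
    finally show "u s \<le> M * U + e" by simp
  qed
  have "U \<le> M * U" unfolding U_def by (rule cSup_least) (use ux U_def in auto)
  then have "(1 - M) * U \<le> 0" by (simp add: algebra_simps)
  then have "U \<le> 0" using Mlt by (simp add: mult_le_0_iff)
  then have "U = 0" using U0 by simp
  then have "u x \<le> 0" using ux[OF x0] by simp
  then have "cmod (y x) / min x r \<le> 0" unfolding u_def .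
  moreover have "min x r > 0" using x0 r_pos by simp
  ultimately have "cmod (y x) \<le> 0" by (simp add: divide_le_0_iff)
  then show ?thesis by simp
qed

end

lemma a_ineq:
  assumes a_pos: "\<forall>x>0. a x > 0" and a_mono: "mono_on {0<..} a"
    and ahat_mono: "mono_on {0<..} (a_hat a)" and r: "r > 0" and s: "s > 0"
  shows "min s r \<le> a_hat a r * a s"
proof (cases "s \<le> r")
  case True
  have "a_hat a s \<le> a_hat a r" using mono_onD[OF ahat_mono, of s r] True s r by auto
  then have "s / a s \<le> a_hat a r" unfolding a_hat_def .
  then have "s \<le> a_hat a r * a s" using a_pos s by (simp add: divide_le_eq)
  then show ?thesis using True by simp
next
  case False
  have "a r \<le> a s" using mono_onD[OF a_mono, of r s] False s r by auto
  then have "r / a r * a r \<le> r / a r * a s" using a_pos r by (intro mult_left_mono) auto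
  moreover have "r / a r * a r = r"
  proof -
    have "a r > 0" using a_pos r by simp
    then show ?thesis by simp
  qed
  ultimately have "r \<le> a_hat a r * a s" unfolding a_hat_def by simp
  then show ?thesis using False by simp
qed

lemma k_choice:
  fixes lam :: complex
  assumes "\<not> (Im lam = 0 \<and> Re lam \<ge> 0)"
  shows "(\<i> * csqrt (-lam))^2 = lam" "Im (\<i> * csqrt (-lam)) > 0"
proof -
  show "(\<i> * csqrt (-lam))^2 = lam" by (simp add: power_mult_distrib)
  show "Im (\<i> * csqrt (-lam)) > 0"
  proof (rule ccontr)
    assume "\<not> Im (\<i> * csqrt (-lam)) > 0"
    then have re: "Re (csqrt (-lam)) = 0" and im: "Im (csqrt (-lam)) \<ge> 0" using csqrt_principal[of "-lam"] by auto
    define t where "t = Im (csqrt (-lam))"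
    have "csqrt (-lam) = \<i> * of_real t" using re unfolding t_def by (simp add: complex_eq_iff)
    then have "-lam = (\<i> * of_real t)^2" by (metis power2_csqrt)
    then have "lam = of_real (t^2)" by (simp add: power_mult_distrib)
    then show False using assms by simp
  qed
qed

lemma part1:
  fixes a :: "real \<Rightarrow> real" and q :: "real \<Rightarrow> complex"
  assumes a_pos: "\<forall>x>0. a x > 0"
    and a_mono: "mono_on {0<..} a"
    and ahat_mono: "mono_on {0<..} (a_hat a)"
    and q_meas: "q \<in> borel_measurable lborel"
    and q_fin: "set_integrable lborel {0<..} (\<lambda>x. a x * cmod (q x))"
    and lam: "lam \<in> sigma_d q"
  shows "ereal (cmod lam) \<le> inverse (rho a q)"
proof -
  from lam have nr: "\<not> (Im lam = 0 \<and> Re lam \<ge> 0)" and ev: "is_eigenvalue q lam"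
    by (auto simp: sigma_d_def)
  obtain y f y' where L2y: "L2_half y" and f0: "\<forall>x\<ge>0. f x = 0" and y0: "y 0 = 0"
    and yd: "\<forall>x\<ge>0. (y has_vector_derivative y' x) (at x within {0..})"
    and hi: "\<forall>x\<ge>0. set_integrable lborel {0..x} (\<lambda>t. (q t - lam) * y t - f t) \<and>
          y' x = y' 0 + (LINT t:{0..x}|lborel. (q t - lam) * y t - f t)"
    and nz: "\<exists>x\<ge>0. y x \<noteq> 0"
    using ev unfolding is_eigenvalue_def Hq_minus_solves_def One_nat_def root_vec.simps by blast
  define k where "k = \<i> * csqrt (-lam)"
  have k2: "k^2 = lam" and kim: "Im k > 0" unfolding k_def using k_choice[OF nr] by auto
  have k0: "k \<noteq> 0" using kim by auto
  define r where "r = 1 / cmod k"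
  have r0: "r > 0" unfolding r_def using k0 by simp
  have hint: "set_integrable lborel {0..x} (\<lambda>t. (q t - lam) * y t)" if x: "x \<ge> 0" for x
  proof -
    have "set_integrable lborel {0..x} (\<lambda>t. (q t - lam) * y t - f t)" using hi x by blast
    then show ?thesis by (rule set_integrable_cong[THEN iffD1, rotated -1]) (use f0 in auto)
  qed
  have yeq: "y' x = y' 0 + (LINT t:{0..x}|lborel. (q t - lam) * y t)" if x: "x \<ge> 0" for x
  proof -
    have "y' x = y' 0 + (LINT t:{0..x}|lborel. (q t - lam) * y t - f t)" using hi x by blast
    also have "(LINT t:{0..x}|lborel. (q t - lam) * y t - f t) = (LINT t:{0..x}|lborel. (q t - lam) * y t)"
      by (rule set_lebesgue_integral_cong) (use f0 in auto)
    finally show ?thesis .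
  qed
  have L2: "set_integrable lborel {0..} (\<lambda>t. (cmod (y t))\<^sup>2)" using L2y unfolding L2_half_def by blast
  have bnd: "min s r * cmod (q s) \<le> a_hat a r * (a s * cmod (q s))" if "s \<in> {0<..}" for s
    using a_ineq[OF a_pos a_mono ahat_mono r0, of s] that by (simp add: mult.assoc[symmetric] mult_right_mono)
  have mint: "set_integrable lborel {0<..} (\<lambda>s. min s r * cmod (q s))"
  proof (rule set_integrable_bound[OF set_integrable_mult_right[OF q_fin]])
    show "set_borel_measurable lborel {0<..} (\<lambda>s. min s r * cmod (q s))"
      unfolding set_borel_measurable_def using q_meas by measurable
    show "AE x in lborel. x \<in> {0<..} \<longrightarrow> norm (min x r * cmod (q x)) \<le> norm (a_hat a r * (a x * cmod (q x)))"
    proof (intro AE_I2 impI)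
      fix x :: real assume x: "x \<in> {0<..}"
      have "0 \<le> min x r * cmod (q x)" using x r0 by simp
      then show "norm (min x r * cmod (q x)) \<le> norm (a_hat a r * (a x * cmod (q x)))" using bnd[OF x] by simp
    qed
  qed
  define M where "M = (LINT s:{0<..}|lborel. min s r * cmod (q s))"
  have M_le: "M \<le> a_hat a r * a_norm a q"
  proof -
    have "M \<le> (LINT s:{0<..}|lborel. a_hat a r * (a s * cmod (q s)))"
      unfolding M_def by (rule set_integral_mono[OF mint set_integrable_mult_right[OF q_fin] bnd])
    also have "\<dots> = a_hat a r * a_norm a q" unfolding a_norm_def by simp
    finally show ?thesis .
  qed
  have M1: "M \<ge> 1"
  proof (rule ccontr)
    assume "\<not> M \<ge> 1"
    then have Mlt: "M < 1" by simp
    interpret E: eig2 q y y' lam k M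
    proof unfold_locales
      show "y 0 = 0" by (rule y0)
      show "\<And>x. 0 \<le> x \<Longrightarrow> (y has_vector_derivative y' x) (at x within {0..})" using yd by blast
      show "\<And>x. 0 \<le> x \<Longrightarrow> set_integrable lborel {0..x} (\<lambda>t. (q t - lam) * y t)" by (rule hint)
      show "\<And>x. 0 \<le> x \<Longrightarrow> y' x = y' 0 + (LINT t:{0..x}|lborel. (q t - lam) * y t)" by (rule yeq)
      show "lam = k^2" using k2 by simp
      show "Im k > 0" by (rule kim)
      show "set_integrable lborel {0..} (\<lambda>t. (cmod (y t))\<^sup>2)" by (rule L2)
      show "set_integrable lborel {0<..} (\<lambda>s. min s (1 / cmod k) * cmod (q s))" using mint unfolding r_def .
      show "M = (LINT s:{0<..}|lborel. min s (1 / cmod k) * cmod (q s))" unfolding M_def r_def ..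
      show "M < 1" by (rule Mlt)
    qed
    from nz obtain x where "x \<ge> 0" "y x \<noteq> 0" by blast
    then show False using E.y_zero by blast
  qed
  have ahr: "a_hat a r > 0" unfolding a_hat_def using a_pos r0 by simp
  have prod1: "a_hat a r * a_norm a q \<ge> 1" using M1 M_le by simp
  then have an0: "a_norm a q > 0" using ahr by (metis mult_le_0_iff not_le zero_less_one order.strict_trans1 less_le)
  have ln2: "ln 2 \<le> (1::real)"
  proof -
    have "(2::real) \<le> exp 1" using exp_ge_add_one_self[of "1::real"] by simp
    then show ?thesis by (metis exp_le_cancel_iff exp_ln zero_less_numeral)
  qed
  have lam0: "cmod lam > 0" using nr by auto
  have ck: "(cmod k)^2 = cmod lam" using k2 by (metis norm_power)
  define t0 where "t0 = 1 / cmod lam"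
  have t0p: "t0 > 0" unfolding t0_def using lam0 by simp
  have st0: "sqrt t0 = r" unfolding t0_def r_def using ck[symmetric] k0 by (simp add: real_sqrt_divide)
  have inset: "ereal t0 \<in> {ereal t | t. t > 0 \<and> ereal (a_hat a (sqrt t)) \<ge> ereal (ln 2) / ereal (a_norm a q)}"
  proof -
    have "ln 2 / a_norm a q \<le> a_hat a r"
      using ln2 prod1 an0 by (simp add: divide_le_eq mult.commute)
    then have "ereal (a_hat a (sqrt t0)) \<ge> ereal (ln 2) / ereal (a_norm a q)"
      using an0 st0 by simp
    then show ?thesis using t0p by blast
  qed
  have rho_le: "rho a q \<le> ereal t0" unfolding rho_def by (rule Inf_lower[OF inset])
  have rho0: "rho a q \<ge> 0" unfolding rho_def by (rule Inf_greatest) auto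
  have "inverse (ereal t0) \<le> inverse (rho a q)" by (rule ereal_inverse_antimono[OF rho0 rho_le])
  moreover have "inverse (ereal t0) = ereal (cmod lam)" unfolding t0_def using lam0 by simp
  ultimately show ?thesis by simp
qed

theorem corollary1p3:
  fixes a :: "real \<Rightarrow> real" and q :: "real \<Rightarrow> complex"
  assumes a_pos: "\<forall>x>0. a x > 0"
    and a_loc: "\<forall>s t. 0 < s \<and> s \<le> t \<longrightarrow> set_integrable lborel {s..t} a"
    and a_mono: "mono_on {0<..} a"
    and ahat_mono: "mono_on {0<..} (a_hat a)"
    and q_meas: "q \<in> borel_measurable lborel"
    and q_fin: "set_integrable lborel {0<..} (\<lambda>x. a x * cmod (q x))"
  shows "(\<forall>lam\<in>sigma_d q. ereal (cmod lam) \<le> inverse (rho a q)) \<and>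
         (\<forall>L. ((\<lambda>x. ereal (a_hat a x)) \<longlongrightarrow> L) at_top \<and>
               L < ereal (ln 2) / ereal (a_norm a q)
            \<longrightarrow> rho a q = \<infinity> \<and> sigma_d q = {})"
proof -
  have P1: "\<forall>lam\<in>sigma_d q. ereal (cmod lam) \<le> inverse (rho a q)"
    using part1[OF a_pos a_mono ahat_mono q_meas q_fin] by blast
  have P2: "rho a q = \<infinity> \<and> sigma_d q = {}"
    if lim: "((\<lambda>x. ereal (a_hat a x)) \<longlongrightarrow> L) at_top" and Llt: "L < ereal (ln 2) / ereal (a_norm a q)" for L
  proof -
    have le: "ereal (a_hat a x) \<le> L" if x: "x > 0" for x
    proof (rule tendsto_lowerbound[OF lim])
      show "\<forall>\<^sub>F z in at_top. ereal (a_hat a x) \<le> ereal (a_hat a z)"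
        unfolding eventually_at_top_linorder
        by (rule exI[of _ x]) (use x mono_onD[OF ahat_mono] in auto)
    qed simp
    have empty: "{ereal t | t. t > 0 \<and> ereal (a_hat a (sqrt t)) \<ge> ereal (ln 2) / ereal (a_norm a q)} = {}"
    proof -
      have "\<not> ereal (a_hat a (sqrt t)) \<ge> ereal (ln 2) / ereal (a_norm a q)" if "t > 0" for t
        using le[of "sqrt t"] that Llt by auto
      then show ?thesis by auto
    qed
    have rinf: "rho a q = \<infinity>" unfolding rho_def empty by (simp add: top_ereal_def)
    have "sigma_d q = {}"
    proof (rule ccontr)
      assume "sigma_d q \<noteq> {}"
      then obtain lam where lam: "lam \<in> sigma_d q" by blast
      then have "ereal (cmod lam) \<le> 0" using P1 rinf by auto
      then have "lam = 0" by simp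
      then show False using lam by (simp add: sigma_d_def)
    qed
    then show ?thesis using rinf by simp
  qed
  show ?thesis using P1 P2 by blast
qed

end
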